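(* Let $k,T\in\mathbb{N}$ and let $w\in\{0,1\}^T$ be a characteristic string which violates $k$-slot-CP. Then there exist a decomposition $w=xyz$ with $|y|\ge k+1$ and a fork $\hat F\vdash xy$ such that $\hat F$ is $x$-balanced.
   Context: Characteristic strings and forks. A characteristic string is $w=w_1\dots w_n\in\{0,1\}^n$; index $i$ is honest if $w_i=0$ and adversarial if $w_i=1$. A fork for $w$ is a rooted tree $F=(V,E)$ with edges directed away from the root $r$, together with a labeling $\ell:V\to\{0,\dots,n\}$, such that (F1) $\ell(r)=0$; (F2) labels strictly increase along every directed path; (F3) every honest index is the label of exactly one vertex; (F4) if $i<j$ are honest indices then the vertex labeled $i$ has strictly smaller depth than the vertex labeled $j$. Write $F\vdash w$. A vertex is honest if it is the root or its label is an honest index. A tine is a directed path starting at the root (not necessarily ending at a leaf); its length is its number of edges, $\ell(t)$ is the label of its last vertex, the depth of a vertex is the length of the tine ending at it, and $\mathrm{height}(F)$ is the maximum tine length. A tine $t$ is viable if its length is at least the depth of every honest vertex $v$ with $\ell(v)\le\ell(t)$. The trimmed tine $t^{\lceil k}$ is the portion of $t$ consisting of vertices labeled in $\{0,\dots,\ell(t)-k\}$; $t_1\preceq t_2$ means $t_1$ is a prefix of $t_2$. A fork $F\vdash w$ satisfies $k$-slot-CP if for all pairs of viable tines $t_1,t_2$ with $\ell(t_1)\le\ell(t_2)$ we have $t_1^{\lceil k}\preceq t_2$; $w$ violates $k$-slot-CP if some fork for $w$ does not satisfy it. For $w=xy$, tines $t_1,t_2$ of $F\vdash xy$ are disjoint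 over $y$ (written $t_1\not\sim_x t_2$) if they share no edge terminating at a vertex whose label is an index of $y$ (i.e., a label exceeding $|x|$). A fork $F\vdash xy$ is $x$-balanced if it contains tines $t_1\not\sim_x t_2$ with $\mathrm{length}(t_1)=\mathrm{length}(t_2)=\mathrm{height}(F)$. *)

theory Defs
  imports Main "HOL-Library.Sublist"
begin

text \<open>Characteristic strings: lists of booleans, True = 1 (adversarial), False = 0 (honest).
  Indices are 1-based: index i refers to the list element w ! (i - 1).\<close>

definition honest_idx :: "bool list \<Rightarrow> nat \<Rightarrow> bool" where
  "honest_idx w i \<longleftrightarrow> 1 \<le> i \<and> i \<le> length w \<and> \<not> w ! (i - 1)"

record lgraph =
  verts :: "nat set"
  edges :: "(nat \<times> nat) set"
  root :: nat
  lab :: "nat \<Rightarrow> nat"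

definition is_tine :: "lgraph \<Rightarrow> nat list \<Rightarrow> bool" where
  "is_tine F t \<longleftrightarrow> t \<noteq> [] \<and> hd t = root F \<and> set t \<subseteq> verts F \<and>
     (\<forall>i. Suc i < length t \<longrightarrow> (t ! i, t ! Suc i) \<in> edges F)"

definition tine_len :: "nat list \<Rightarrow> nat" where
  "tine_len t = length t - 1"

definition tine_lab :: "lgraph \<Rightarrow> nat list \<Rightarrow> nat" where
  "tine_lab F t = lab F (last t)"

definition rooted_tree :: "lgraph \<Rightarrow> bool" where
  "rooted_tree F \<longleftrightarrow> finite (verts F) \<and> root F \<in> verts F \<and> edges F \<subseteq> verts F \<times> verts F \<and>
     (\<forall>v \<in> verts F. \<exists>!t. is_tine F t \<and> last t = v)"

definition depth :: "lgraph \<Rightarrow> nat \<Rightarrow> nat" where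
  "depth F v = tine_len (THE t. is_tine F t \<and> last t = v)"

definition height :: "lgraph \<Rightarrow> nat" where
  "height F = Max {tine_len t | t. is_tine F t}"

definition is_fork :: "lgraph \<Rightarrow> bool list \<Rightarrow> bool" where
  "is_fork F w \<longleftrightarrow> rooted_tree F \<and>
     (\<forall>v \<in> verts F. lab F v \<le> length w) \<and>
     lab F (root F) = 0 \<and>
     (\<forall>(u, v) \<in> edges F. lab F u < lab F v) \<and>
     (\<forall>i. honest_idx w i \<longrightarrow> card {v \<in> verts F. lab F v = i} = 1) \<and>
     (\<forall>u \<in> verts F. \<forall>v \<in> verts F. honest_idx w (lab F u) \<and> honest_idx w (lab F v) \<and>
        lab F u < lab F v \<longrightarrow> depth F u < depth F v)"

definition honest_vertex :: "lgraph \<Rightarrow> bool list \<Rightarrow> nat \<Rightarrow> bool" where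
  "honest_vertex F w v \<longleftrightarrow> v = root F \<or> honest_idx w (lab F v)"

definition viable :: "lgraph \<Rightarrow> bool list \<Rightarrow> nat list \<Rightarrow> bool" where
  "viable F w t \<longleftrightarrow> is_tine F t \<and>
     (\<forall>v \<in> verts F. honest_vertex F w v \<and> lab F v \<le> tine_lab F t \<longrightarrow> depth F v \<le> tine_len t)"

text \<open>Trimmed tine: the vertices of t with labels in {0, ..., l(t) - k} (possibly empty
  when l(t) < k).\<close>
definition trim :: "lgraph \<Rightarrow> nat \<Rightarrow> nat list \<Rightarrow> nat list" where
  "trim F k t = filter (\<lambda>v. int (lab F v) \<le> int (tine_lab F t) - int k) t"

definition slot_CP :: "nat \<Rightarrow> lgraph \<Rightarrow> bool list \<Rightarrow> bool" where
  "slot_CP k F w \<longleftrightarrow> (\<forall>t1 t2. viable F w t1 \<and> viable F w t2 \<and> tine_lab F t1 \<le> tine_lab F t2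
       \<longrightarrow> prefix (trim F k t1) t2)"

definition violates_slot_CP :: "nat \<Rightarrow> bool list \<Rightarrow> bool" where
  "violates_slot_CP k w \<longleftrightarrow> (\<exists>F. is_fork F w \<and> \<not> slot_CP k F w)"

definition tine_edges :: "nat list \<Rightarrow> (nat \<times> nat) set" where
  "tine_edges t = set (zip t (tl t))"

text \<open>Disjoint over y (w = xy): no shared edge terminating at a vertex labelled > |x|.\<close>
definition disjoint_over :: "lgraph \<Rightarrow> bool list \<Rightarrow> nat list \<Rightarrow> nat list \<Rightarrow> bool" where
  "disjoint_over F x t1 t2 \<longleftrightarrow>
     (\<forall>(u, v) \<in> tine_edges t1 \<inter> tine_edges t2. \<not> lab F v > length x)"

definition x_balanced :: "lgraph \<Rightarrow> bool list \<Rightarrow> bool" where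
  "x_balanced F x \<longleftrightarrow> (\<exists>t1 t2. is_tine F t1 \<and> is_tine F t2 \<and> disjoint_over F x t1 t2 \<and>
     tine_len t1 = height F \<and> tine_len t2 = height F)"

end

theory Submission
  imports Defs
begin


lemma tine_take: "is_tine F t \<Longrightarrow> 0 < n \<Longrightarrow> is_tine F (take n t)"
  unfolding is_tine_def by (auto simp: hd_take dest: in_set_takeD)

lemma tine_unique: "rooted_tree F \<Longrightarrow> is_tine F t \<Longrightarrow> is_tine F s \<Longrightarrow> last t = last s \<Longrightarrow> t = s"
proof -
  assume a: "rooted_tree F" "is_tine F t" "is_tine F s" "last t = last s"
  have "last t \<in> verts F" using a(2) unfolding is_tine_def by (meson last_in_set subsetD)
  then have "\<exists>!u. is_tine F u \<and> last u = last t" using a(1) unfolding rooted_tree_def by blast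
  then show ?thesis using a by metis
qed

lemma depth_nth: assumes "rooted_tree F" "is_tine F t" "i < length t" shows "depth F (t!i) = i"
proof -
  have tt: "is_tine F (take (Suc i) t)" using tine_take assms by blast
  have lt: "last (take (Suc i) t) = t!i" using assms(3) by (simp add: take_Suc_conv_app_nth)
  have "(THE s. is_tine F s \<and> last s = t!i) = take (Suc i) t"
    apply (rule the_equality) using tt lt apply simp
    using tine_unique[OF assms(1) _ tt] lt by metis
  then show ?thesis unfolding depth_def tine_len_def using assms(3) by simp
qed

lemma depth_last: assumes "rooted_tree F" "is_tine F t" shows "depth F (last t) = tine_len t"
proof -
  have "t \<noteq> []" using assms(2) unfolding is_tine_def by simp
  then show ?thesis using depth_nth[OF assms, of "length t - 1"] by (simp add: last_conv_nth tine_len_def)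
qed

lemma lab_mono: assumes "is_fork F w" "is_tine F t" "i < j" "j < length t"
  shows "lab F (t!i) < lab F (t!j)"
  using assms(3,4)
proof (induction j)
  case 0 then show ?case by simp
next
  case (Suc j)
  have e: "(t!j, t!Suc j) \<in> edges F" using assms(2) Suc.prems unfolding is_tine_def by blast
  have "lab F (t!j) < lab F (t!Suc j)" using assms(1) e unfolding is_fork_def by blast
  then show ?case using Suc by (cases "i = j") auto
qed

lemma lab_le_last: assumes "is_fork F w" "is_tine F t" "v \<in> set t" shows "lab F v \<le> tine_lab F t"
proof -
  obtain i where i: "i < length t" "v = t!i" using assms(3) in_set_conv_nth by metis
  have ne: "t \<noteq> []" using assms(2) unfolding is_tine_def by simp
  have "lab F (t!i) \<le> lab F (t!(length t - 1))"
  proof (cases "i = length t - 1")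
    case False
    then have "i < length t - 1" using i by linarith
    moreover have "length t - 1 < length t" using i by linarith
    ultimately show ?thesis using lab_mono[OF assms(1,2), of i "length t - 1"] i by simp
  qed simp
  then show ?thesis using i ne by (simp add: tine_lab_def last_conv_nth)
qed

lemma fork_tree: "is_fork F w \<Longrightarrow> rooted_tree F" unfolding is_fork_def by simp

lemma common_prefix: assumes "rooted_tree F" "is_tine F t1" "is_tine F t2" "i < length t1" "j < length t2"
  "t1!i = t2!j" shows "i = j \<and> take (Suc i) t1 = take (Suc i) t2"
proof -
  have "i = j" using depth_nth[OF assms(1,2,4)] depth_nth[OF assms(1,3,5)] assms(6) by simp
  moreover have "take (Suc i) t1 = take (Suc i) t2"
  proof (rule tine_unique[OF assms(1)])
    show "is_tine F (take (Suc i) t1)" using tine_take assms(2) by blast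
    show "is_tine F (take (Suc i) t2)" using tine_take assms(3) by blast
    show "last (take (Suc i) t1) = last (take (Suc i) t2)"
      using assms(4,5,6) calculation by (simp add: take_Suc_conv_app_nth)
  qed
  ultimately show ?thesis by simp
qed

lemma in_tine_edges: "(p,q) \<in> tine_edges t \<Longrightarrow> \<exists>i. Suc i < length t \<and> q = t!Suc i"
proof -
  assume "(p,q) \<in> tine_edges t"
  then obtain n where n: "t!n = p" "tl t ! n = q" "n < length t" "n < length (tl t)"
    unfolding tine_edges_def in_set_zip by auto
  then have "Suc n < length t" by simp
  moreover have "q = t ! Suc n" using n nth_tl by metis
  ultimately show ?thesis by blast
qed

lemma tine_edges_take: "tine_edges (take n t) \<subseteq> tine_edges t"
proof
  fix e assume "e \<in> tine_edges (take n t)"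
  then obtain i where i: "e = (take n t ! i, tl (take n t) ! i)" "i < length (take n t)" "i < length (tl (take n t))"
    unfolding tine_edges_def in_set_zip by (metis prod.collapse)
  have si: "Suc i < n" "Suc i < length t" using i(3) by auto
  have "tl (take n t) ! i = take n t ! Suc i" using i(3) nth_tl by metis
  also have "\<dots> = t ! Suc i" using si by simp
  also have "\<dots> = tl t ! i" using si nth_tl[of i t] by simp
  finally have e: "e = (t ! i, tl t ! i)" using i si by simp
  show "e \<in> tine_edges t" unfolding tine_edges_def in_set_zip
    using e si by (intro exI[of _ i]) auto
qed

lemma shared_edge: assumes "is_fork F w" "is_tine F t1" "is_tine F t2" "a \<in> set t1" "a \<notin> set t2"
  "(p,q) \<in> tine_edges t1" "(p,q) \<in> tine_edges t2" shows "lab F q < lab F a"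
proof -
  have rt: "rooted_tree F" using assms(1) by (rule fork_tree)
  obtain i where i: "Suc i < length t1" "q = t1!Suc i" using in_tine_edges assms(6) by blast
  obtain j where j: "Suc j < length t2" "q = t2!Suc j" using in_tine_edges assms(7) by blast
  have c: "take (Suc (Suc i)) t1 = take (Suc (Suc i)) t2"
    using common_prefix[OF rt assms(2,3) i(1) j(1)] i j by force
  obtain r where r: "r < length t1" "a = t1!r" using assms(4) in_set_conv_nth by metis
  show ?thesis
  proof (cases "r \<le> Suc i")
    case True
    then have "a \<in> set (take (Suc (Suc i)) t1)" using r by (simp add: in_set_conv_nth) (metis less_Suc_eq_le nth_take)
    then have "a \<in> set t2" using c by (metis in_set_takeD)
    then show ?thesis using assms(5) by simp
  next
    case False
    then show ?thesis using lab_mono[OF assms(1,2), of "Suc i" r] r i by simp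
  qed
qed



lemma depth_root: assumes "rooted_tree F" shows "depth F (root F) = 0"
proof -
  have "is_tine F [root F]" using assms unfolding is_tine_def rooted_tree_def by simp
  then show ?thesis using depth_nth[OF assms, of "[root F]" 0] by simp
qed

lemma tine_exists: assumes "rooted_tree F" "v \<in> verts F" obtains t where "is_tine F t" "last t = v"
  using assms unfolding rooted_tree_def by blast

lemma build_fork:
  assumes fk: "is_fork F w" and s1: "is_tine F s1" and s2: "is_tine F s2"
    and l1: "tine_len s1 = m" and l2: "tine_len s2 = m"
    and b1: "\<forall>v\<in>set s1. lab F v \<le> L" and b2: "\<forall>v\<in>set s2. lab F v \<le> L"
    and hon: "\<forall>v\<in>verts F. honest_idx w (lab F v) \<and> lab F v \<le> L \<longrightarrow> depth F v \<le> m"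
    and sh: "\<forall>(p,q)\<in>tine_edges s1 \<inter> tine_edges s2. lab F q \<le> X"
    and XL: "X + k + 1 \<le> L" and Lw: "L \<le> length w"
  shows "\<exists>x y z. w = x @ y @ z \<and> length y \<ge> k + 1 \<and>
           (\<exists>F. is_fork F (x @ y) \<and> x_balanced F x)"
proof -
  have rt: "rooted_tree F" using fk by (rule fork_tree)
  define x where "x = take X w"
  define y where "y = take (L - X) (drop X w)"
  define z where "z = drop L w"
  have xy: "x @ y = take L w" unfolding x_def y_def using XL take_add[of X "L - X" w] by simp
  have wd: "w = x @ y @ z" using xy unfolding z_def by (metis append.assoc append_take_drop_id)
  have ly: "length y \<ge> k + 1" unfolding y_def using XL Lw by simp
  have lx: "length x = X" unfolding x_def using XL Lw by simp
  have hxy: "honest_idx (take L w) i \<longleftrightarrow> honest_idx w i \<and> i \<le> L" for i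
    unfolding honest_idx_def using Lw by auto
  define V where "V = {v \<in> verts F. lab F v \<le> L \<and> depth F v \<le> m}"
  define G where "G = \<lparr>verts = V, edges = edges F \<inter> (V \<times> V), root = root F, lab = lab F\<rparr>"
  have G_simps: "verts G = V" "edges G = edges F \<inter> (V \<times> V)" "root G = root F" "lab G = lab F"
    unfolding G_def by simp_all
  have tG: "is_tine G t \<longleftrightarrow> is_tine F t \<and> set t \<subseteq> V" for t
  proof
    assume "is_tine G t" then show "is_tine F t \<and> set t \<subseteq> V"
      unfolding is_tine_def G_simps V_def by blast
  next
    assume A: "is_tine F t \<and> set t \<subseteq> V"
    have "t!i \<in> V \<and> t!Suc i \<in> V" if "Suc i < length t" for i
    proof -
      have "t!i \<in> set t" "t!Suc i \<in> set t" using that by simp_all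
      then show ?thesis using A by blast
    qed
    then show "is_tine G t" using A unfolding is_tine_def G_simps V_def by blast
  qed
  have inV: "set t \<subseteq> V" if "is_tine F t" "last t \<in> V" for t
  proof
    fix u assume "u \<in> set t"
    then obtain i where i: "i < length t" "u = t!i" using in_set_conv_nth by metis
    have ne: "t \<noteq> []" using that unfolding is_tine_def by simp
    have "lab F u \<le> lab F (last t)" using lab_le_last[OF fk that(1) \<open>u \<in> set t\<close>] by (simp add: tine_lab_def)
    moreover have "depth F u \<le> depth F (last t)"
      using depth_nth[OF rt that(1) i(1)] depth_last[OF rt that(1)] i unfolding tine_len_def by simp
    moreover have "u \<in> verts F" using that(1) \<open>u \<in> set t\<close> unfolding is_tine_def by blast
    ultimately show "u \<in> V" using that(2) unfolding V_def by auto
  qed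
  have uniqG: "\<exists>!t. is_tine G t \<and> last t = v" if "v \<in> V" for v
  proof -
    have "v \<in> verts F" using that unfolding V_def by simp
    then obtain t where t: "is_tine F t" "last t = v" using tine_exists[OF rt] by blast
    have "is_tine G t" using tG inV t that by auto
    moreover have "s = t" if "is_tine G s" "last s = v" for s
      using tine_unique[OF rt] t that tG by metis
    ultimately show ?thesis using t by blast
  qed
  have rootV: "root F \<in> V" using fk depth_root[OF rt] unfolding V_def is_fork_def rooted_tree_def by simp
  have rtG: "rooted_tree G" unfolding rooted_tree_def G_simps
    using rt rootV uniqG unfolding rooted_tree_def V_def by (auto intro: finite_subset)
  have dG: "depth G v = depth F v" if "v \<in> V" for v
  proof -
    have "v \<in> verts F" using that unfolding V_def by simp
    then obtain t where t: "is_tine F t" "last t = v" using tine_exists[OF rt] by blast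
    have tg: "is_tine G t" using tG inV t that by auto
    show ?thesis using depth_last[OF rt t(1)] depth_last[OF rtG tg] t by simp
  qed
  have fG: "is_fork G (x @ y)"
    unfolding is_fork_def xy
  proof (intro conjI)
    show "rooted_tree G" by (rule rtG)
    show "\<forall>v\<in>verts G. lab G v \<le> length (take L w)" using Lw unfolding G_simps V_def by auto
    show "lab G (root G) = 0" using fk unfolding G_simps is_fork_def by simp
    show "\<forall>(u, v)\<in>edges G. lab G u < lab G v" using fk unfolding G_simps is_fork_def by auto
    show "\<forall>i. honest_idx (take L w) i \<longrightarrow> card {v \<in> verts G. lab G v = i} = 1"
    proof (intro allI impI)
      fix i assume "honest_idx (take L w) i"
      then have hi: "honest_idx w i" "i \<le> L" using hxy by auto
      have "{v \<in> verts G. lab G v = i} = {v \<in> verts F. lab F v = i}"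
        unfolding G_simps V_def using hon hi by auto
      then show "card {v \<in> verts G. lab G v = i} = 1" using fk hi unfolding is_fork_def by simp
    qed
    show "\<forall>u\<in>verts G. \<forall>v\<in>verts G. honest_idx (take L w) (lab G u) \<and> honest_idx (take L w) (lab G v) \<and>
        lab G u < lab G v \<longrightarrow> depth G u < depth G v"
      using fk dG hxy unfolding G_simps is_fork_def V_def by auto
  qed
  have s1G: "is_tine G s1" and s2G: "is_tine G s2"
  proof -
    have "set s \<subseteq> V" if "is_tine F s" "tine_len s = m" "\<forall>v\<in>set s. lab F v \<le> L" for s
    proof
      fix u assume u: "u \<in> set s"
      then obtain i where i: "i < length s" "u = s!i" using in_set_conv_nth by metis
      have "depth F u = i" using depth_nth[OF rt that(1) i(1)] i by simp
      then show "u \<in> V" using that u i unfolding V_def tine_len_def is_tine_def by auto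
    qed
    then show "is_tine G s1" "is_tine G s2" using tG s1 s2 l1 l2 b1 b2 by auto
  qed
  have hG: "height G = m"
    unfolding height_def
  proof (rule Max_eqI)
    have "{tine_len t |t. is_tine G t} \<subseteq> {..m}"
    proof
      fix n assume "n \<in> {tine_len t |t. is_tine G t}"
      then obtain t where t: "is_tine G t" "n = tine_len t" by blast
      have "last t \<in> V" using t tG unfolding is_tine_def by auto
      then show "n \<in> {..m}" using depth_last[OF rt] t tG unfolding V_def by auto
    qed
    then show "finite {tine_len t |t. is_tine G t}" using finite_subset by blast
    show "\<And>y. y \<in> {tine_len t |t. is_tine G t} \<Longrightarrow> y \<le> m" using \<open>_ \<subseteq> {..m}\<close> by auto
    show "m \<in> {tine_len t |t. is_tine G t}" using s1G l1 by blast
  qed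
  have "x_balanced G x" unfolding x_balanced_def disjoint_over_def
  proof (intro exI conjI)
    show "\<forall>(u, v)\<in>tine_edges s1 \<inter> tine_edges s2. \<not> length x < lab G v"
    proof (intro ballI)
      fix e assume e: "e \<in> tine_edges s1 \<inter> tine_edges s2"
      obtain p q where pq: "e = (p,q)" by fastforce
      have "lab F q \<le> X" using sh e pq by blast
      then show "case e of (u, v) \<Rightarrow> \<not> length x < lab G v" using pq lx unfolding G_simps by simp
    qed
  qed (use s1G s2G l1 l2 hG in auto)
  then show ?thesis using wd ly fG by blast
qed



lemma honest_viable:
  assumes fk: "is_fork F w" and t: "is_tine F t" and hv: "honest_idx w (lab F (last t))"
  shows "viable F w t"
  unfolding viable_def
proof (intro conjI t ballI impI)
  have rt: "rooted_tree F" using fk by (rule fork_tree)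
  fix u assume u: "u \<in> verts F" "honest_vertex F w u \<and> lab F u \<le> tine_lab F t"
  have lv: "last t \<in> verts F" using t unfolding is_tine_def by (meson last_in_set subsetD)
  have dl: "depth F (last t) = tine_len t" using depth_last[OF rt t] .
  show "depth F u \<le> tine_len t"
  proof (cases "u = root F")
    case True then show ?thesis using depth_root[OF rt] by simp
  next
    case False
    then have hu: "honest_idx w (lab F u)" using u unfolding honest_vertex_def by simp
    show ?thesis
    proof (cases "lab F u < lab F (last t)")
      case True
      then show ?thesis using fk u lv hu hv dl unfolding is_fork_def by force
    next
      case False
      then have eq: "lab F u = lab F (last t)" using u unfolding tine_lab_def by simp
      have "card {v \<in> verts F. lab F v = lab F u} = 1" using fk hu unfolding is_fork_def by blast
      then have "u = last t" using u(1) lv eq by (metis (mono_tags, lifting) card_1_singletonE mem_Collect_eq singletonD)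
      then show ?thesis using dl by simp
    qed
  qed
qed

lemma take_len: "is_tine F t \<Longrightarrow> m \<le> tine_len t \<Longrightarrow> tine_len (take (Suc m) t) = m"
  unfolding tine_len_def is_tine_def by auto

lemma lab_bound: "is_fork F w \<Longrightarrow> is_tine F t \<Longrightarrow> tine_lab F t \<le> length w"
  unfolding is_fork_def is_tine_def tine_lab_def by (meson last_in_set subsetD)

lemma take_lab_less: assumes "is_fork F w" "is_tine F t" "m < tine_len t" "v \<in> set (take (Suc m) t)"
  shows "lab F v < tine_lab F t"
proof -
  obtain i where i: "i < length (take (Suc m) t)" "v = take (Suc m) t ! i" using assms(4) in_set_conv_nth by metis
  have "i \<le> m" "i < length t" using i by auto
  then have "lab F (t!i) < lab F (t!(length t - 1))" using lab_mono[OF assms(1,2)] assms(3) unfolding tine_len_def by simp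
  moreover have "t \<noteq> []" using assms(2) unfolding is_tine_def by simp
  ultimately show ?thesis using i unfolding tine_lab_def by (simp add: last_conv_nth)
qed

definition GOOD where
  "GOOD F w a k L m s1 s2 \<longleftrightarrow> is_tine F s1 \<and> is_tine F s2 \<and> tine_len s1 = m \<and> tine_len s2 = m \<and>
    (\<forall>v\<in>set s1. lab F v \<le> L) \<and> (\<forall>v\<in>set s2. lab F v \<le> L) \<and>
    (\<forall>v\<in>verts F. honest_idx w (lab F v) \<and> lab F v \<le> L \<longrightarrow> depth F v \<le> m) \<and>
    (\<forall>(p,q)\<in>tine_edges s1 \<inter> tine_edges s2. lab F q < lab F a) \<and> lab F a + k \<le> L \<and> L \<le> length w"

lemma shared_take:
  assumes "is_fork F w" "is_tine F t1" "is_tine F t2" "a \<in> set t1" "a \<notin> set t2"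
  shows "\<forall>(p,q)\<in>tine_edges (take n1 t1) \<inter> tine_edges (take n2 t2). lab F q < lab F a"
  using shared_edge[OF assms] tine_edges_take by blast

lemma main:
  assumes fk: "is_fork F w" and v2: "viable F w t2" and a2: "a \<notin> set t2"
  shows "viable F w t1 \<Longrightarrow> a \<in> set t1 \<Longrightarrow> lab F a + k \<le> tine_lab F t1 \<Longrightarrow> tine_lab F t1 \<le> tine_lab F t2
    \<Longrightarrow> \<exists>L m s1 s2. GOOD F w a k L m s1 s2"
proof (induction "tine_len t2 - tine_len t1" arbitrary: t1 rule: less_induct)
  case less
  have rt: "rooted_tree F" using fk by (rule fork_tree)
  have T1: "is_tine F t1" using less.prems unfolding viable_def by simp
  have T2: "is_tine F t2" using v2 unfolding viable_def by simp
  have V1: "depth F v \<le> tine_len t1" if "v \<in> verts F" "honest_idx w (lab F v)" "lab F v \<le> tine_lab F t1" for v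
    using less.prems(1) that unfolding viable_def honest_vertex_def by blast
  have V2: "depth F v \<le> tine_len t2" if "v \<in> verts F" "honest_idx w (lab F v)" "lab F v \<le> tine_lab F t2" for v
    using v2 that unfolding viable_def honest_vertex_def by blast
  have sh: "\<forall>(p,q)\<in>tine_edges (take n1 t1) \<inter> tine_edges (take n2 t2). lab F q < lab F a" for n1 n2
    using shared_take[OF fk T1 T2 less.prems(2) a2] .
  have L1: "lab F v \<le> tine_lab F t1" if "v \<in> set t1" for v using lab_le_last[OF fk T1 that] .
  have L2: "lab F v \<le> tine_lab F t2" if "v \<in> set t2" for v using lab_le_last[OF fk T2 that] .
  have bw: "tine_lab F t2 \<le> length w" using lab_bound[OF fk T2] .
  show ?case
  proof (cases "tine_len t2 \<le> tine_len t1")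
    case True
    have "GOOD F w a k (tine_lab F t2) (tine_len t2) (take (Suc (tine_len t2)) t1) t2"
      unfolding GOOD_def
    proof (intro conjI)
      show "is_tine F (take (Suc (tine_len t2)) t1)" using tine_take T1 by blast
      show "tine_len (take (Suc (tine_len t2)) t1) = tine_len t2" using take_len T1 True by blast
      show "\<forall>v\<in>set (take (Suc (tine_len t2)) t1). lab F v \<le> tine_lab F t2"
        using L1 less.prems(4) by (meson in_set_takeD order_trans)
      show "\<forall>(p,q)\<in>tine_edges (take (Suc (tine_len t2)) t1) \<inter> tine_edges t2. lab F q < lab F a"
        using sh[of "Suc (tine_len t2)" "length t2"] by simp
    qed (use T2 L2 V2 less.prems bw in auto)
    then show ?thesis by blast
  next
    case False
    define H where "H = {v \<in> verts F. honest_idx w (lab F v) \<and> lab F v \<le> tine_lab F t2 \<and> tine_len t1 < depth F v}"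
    show ?thesis
    proof (cases "H = {}")
      case True
      have "GOOD F w a k (tine_lab F t2) (tine_len t1) t1 (take (Suc (tine_len t1)) t2)"
        unfolding GOOD_def
      proof (intro conjI)
        show "is_tine F (take (Suc (tine_len t1)) t2)" using tine_take T2 by blast
        show "tine_len (take (Suc (tine_len t1)) t2) = tine_len t1" using take_len T2 False by simp
        show "\<forall>v\<in>set (take (Suc (tine_len t1)) t2). lab F v \<le> tine_lab F t2"
          using L2 by (meson in_set_takeD)
        show "\<forall>(p,q)\<in>tine_edges t1 \<inter> tine_edges (take (Suc (tine_len t1)) t2). lab F q < lab F a"
          using sh[of "length t1" "Suc (tine_len t1)"] by simp
        show "\<forall>v\<in>verts F. honest_idx w (lab F v) \<and> lab F v \<le> tine_lab F t2 \<longrightarrow> depth F v \<le> tine_len t1"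
          using True unfolding H_def by auto
      qed (use T1 L1 less.prems bw in \<open>auto intro: order_trans\<close>)
      then show ?thesis by blast
    next
      case Hne: False
      then obtain h0 where "h0 \<in> H" by blast
      then obtain h where h: "h \<in> H" and hmin: "\<And>v. v \<in> H \<Longrightarrow> lab F h \<le> lab F v"
        using ex_has_least_nat[of "\<lambda>v. v \<in> H" h0 "lab F"] by blast
      have hv: "h \<in> verts F" "honest_idx w (lab F h)" "lab F h \<le> tine_lab F t2" "tine_len t1 < depth F h"
        using h unfolding H_def by auto
      obtain t3 where t3: "is_tine F t3" "last t3 = h" using tine_exists[OF rt hv(1)] by blast
      have d3: "tine_len t3 = depth F h" using depth_last[OF rt t3(1)] t3(2) by simp
      have l3: "tine_lab F t3 = lab F h" using t3 unfolding tine_lab_def by simp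
      have hgt: "tine_lab F t1 < lab F h" using V1[OF hv(1,2)] hv(4) by force
      show ?thesis
      proof (cases "a \<in> set t3")
        case True
        have vt3: "viable F w t3" using honest_viable[OF fk t3(1)] t3 hv by simp
        have dle: "depth F h \<le> tine_len t2" using V2 hv by blast
        have "tine_len t2 - tine_len t3 < tine_len t2 - tine_len t1" using d3 dle hv(4) by linarith
        then show ?thesis using less.hyps[OF _ vt3 True] l3 hgt less.prems(3) hv(3) by simp
      next
        case a3: False
        have sh3: "\<forall>(p,q)\<in>tine_edges (take n1 t1) \<inter> tine_edges (take n2 t3). lab F q < lab F a" for n1 n2
          using shared_take[OF fk T1 t3(1) less.prems(2) a3] .
        have "GOOD F w a k (lab F h - 1) (tine_len t1) t1 (take (Suc (tine_len t1)) t3)"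
          unfolding GOOD_def
        proof (intro conjI)
          show "is_tine F (take (Suc (tine_len t1)) t3)" using tine_take t3 by blast
          show "tine_len (take (Suc (tine_len t1)) t3) = tine_len t1" using take_len t3 d3 hv(4) by simp
          show "\<forall>v\<in>set (take (Suc (tine_len t1)) t3). lab F v \<le> lab F h - 1"
            using take_lab_less[OF fk t3(1), of "tine_len t1"] d3 hv(4) l3 by fastforce
          show "\<forall>(p,q)\<in>tine_edges t1 \<inter> tine_edges (take (Suc (tine_len t1)) t3). lab F q < lab F a"
            using sh3[of "length t1" "Suc (tine_len t1)"] by simp
          show "\<forall>v\<in>verts F. honest_idx w (lab F v) \<and> lab F v \<le> lab F h - 1 \<longrightarrow> depth F v \<le> tine_len t1"
          proof (intro ballI impI)
            fix v assume v: "v \<in> verts F" "honest_idx w (lab F v) \<and> lab F v \<le> lab F h - 1"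
            show "depth F v \<le> tine_len t1"
            proof (rule ccontr)
              assume "\<not> ?thesis"
              then have "v \<in> H" using v hv hgt unfolding H_def by auto
              then show False using hmin v hgt by fastforce
            qed
          qed
          show "\<forall>v\<in>set t1. lab F v \<le> lab F h - 1" using L1 hgt by fastforce
          show "lab F a + k \<le> lab F h - 1" using less.prems(3) hgt by linarith
          show "lab F h - 1 \<le> length w" using hv(3) bw by linarith
        qed (use T1 in auto)
        then show ?thesis by blast
      qed
    qed
  qed
qed



lemma filter_takeWhile_mono:
  "(\<And>i j. i < j \<Longrightarrow> j < length xs \<Longrightarrow> f (xs!i) < f (xs!j)) \<Longrightarrow>
   filter (\<lambda>v. int (f v) \<le> c) xs = takeWhile (\<lambda>v. int (f v) \<le> c) xs"
proof (induction xs)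
  case Nil then show ?case by simp
next
  case (Cons x xs)
  have ih: "filter (\<lambda>v. int (f v) \<le> c) xs = takeWhile (\<lambda>v. int (f v) \<le> c) xs"
  proof (rule Cons.IH)
    fix i j assume ij: "i < j" "j < length xs"
    have "Suc i < Suc j" "Suc j < length (x#xs)" using ij by simp_all
    then have "f ((x#xs)!Suc i) < f ((x#xs)!Suc j)" by (rule Cons.prems)
    then show "f (xs!i) < f (xs!j)" by simp
  qed
  show ?case
  proof (cases "int (f x) \<le> c")
    case True then show ?thesis using ih by simp
  next
    case False
    have "\<not> int (f y) \<le> c" if "y \<in> set xs" for y
    proof -
      have "\<exists>j<length xs. xs!j = y" using that by (simp add: in_set_conv_nth)
      then obtain j where j: "j < length xs" "xs!j = y" by blast
      have "0 < Suc j" "Suc j < length (x#xs)" using j by simp_all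
      then have "f ((x#xs)!0) < f ((x#xs)!Suc j)" by (rule Cons.prems)
      then have "f x < f y" using j by simp
      then show ?thesis using False by linarith
    qed
    then have "filter (\<lambda>v. int (f v) \<le> c) xs = []" by (simp add: filter_empty_conv)
    then show ?thesis using False by simp
  qed
qed

theorem theorem3:
  fixes k T :: nat and w :: "bool list"
  assumes "length w = T"
    and "violates_slot_CP k w"
  shows "\<exists>x y z. w = x @ y @ z \<and> length y \<ge> k + 1 \<and>
           (\<exists>F. is_fork F (x @ y) \<and> x_balanced F x)"
proof -
  obtain F where fk: "is_fork F w" and ncp: "\<not> slot_CP k F w" using assms(2) unfolding violates_slot_CP_def by (elim exE conjE)
  have rt: "rooted_tree F" using fk by (rule fork_tree)
  obtain t1 t2 where v1: "viable F w t1" and v2: "viable F w t2" and l12: "tine_lab F t1 \<le> tine_lab F t2"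
    and np: "\<not> prefix (trim F k t1) t2" using ncp unfolding slot_CP_def by (auto simp del: prefix_def)
  have T1: "is_tine F t1" using v1 unfolding viable_def by (rule conjunct1)
  have T2: "is_tine F t2" using v2 unfolding viable_def by (rule conjunct1)
  define Q where "Q = (\<lambda>v. int (lab F v) \<le> int (tine_lab F t1) - int k)"
  have trQ: "trim F k t1 = takeWhile Q t1" unfolding trim_def Q_def
    by (rule filter_takeWhile_mono) (rule lab_mono[OF fk T1]; assumption)
  define j where "j = length (takeWhile Q t1)"
  have tW: "takeWhile Q t1 = take j t1" unfolding j_def by (rule takeWhile_eq_take)
  have tj: "trim F k t1 = take j t1" using trQ tW by simp
  have jl: "j \<le> length t1" unfolding j_def by (rule length_takeWhile_le)
  have j0: "j \<noteq> 0" using np tj by (metis Nil_prefix take_0)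
  define b where "b = t1 ! (j - 1)"
  have bl: "j - 1 < length t1" using jl j0 by simp
  have e1: "take j t1 ! (j-1) = b" using bl j0 b_def by simp
  have e2: "j - 1 < length (take j t1)" using bl j0 by simp
  have e3: "b \<in> set (take j t1)" using e1 e2 nth_mem by metis
  have bt: "b \<in> set (takeWhile Q t1)" using e3 tW by simp
  have Qb: "Q b" using set_takeWhileD[OF bt] by simp
  have b1: "b \<in> set t1" using set_takeWhileD[OF bt] by simp
  have b2: "b \<notin> set t2"
  proof
    assume "b \<in> set t2"
    then have "\<exists>j'<length t2. t2 ! j' = b" by (simp add: in_set_conv_nth)
    then obtain j' where j': "j' < length t2" "t2 ! j' = b" by blast
    have "take (Suc (j - 1)) t1 = take (Suc (j - 1)) t2"
      using common_prefix[OF rt T1 T2 bl j'(1)] j' b_def by (metis (no_types, lifting))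
    then have "take j t1 = take j t2" using j0 by simp
    then show False using np tj take_is_prefix by metis
  qed
  have bk: "lab F b + k \<le> tine_lab F t1" using Qb unfolding Q_def by linarith
  obtain L m s1 s2 where G: "GOOD F w b k L m s1 s2"
    using main[OF fk v2 b2 v1 b1 bk l12] by blast
  have bpos: "1 \<le> lab F b"
  proof -
    have "\<exists>r<length t1. t1 ! r = b" using b1 by (simp add: in_set_conv_nth)
    then obtain r where r: "r < length t1" "b = t1 ! r" by auto
    have "r \<noteq> 0"
    proof
      assume "r = 0"
      then have "b = root F" using r T1 unfolding is_tine_def by (metis hd_conv_nth)
      moreover have "root F \<in> set t2" using T2 unfolding is_tine_def by (metis hd_in_set)
      ultimately show False using b2 by simp
    qed
    then have "lab F (t1!0) < lab F b" using lab_mono[OF fk T1, of 0 r] r by simp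
    then show ?thesis by simp
  qed
  have g: "is_tine F s1" "is_tine F s2" "tine_len s1 = m" "tine_len s2 = m"
    "\<forall>v\<in>set s1. lab F v \<le> L" "\<forall>v\<in>set s2. lab F v \<le> L"
    "\<forall>v\<in>verts F. honest_idx w (lab F v) \<and> lab F v \<le> L \<longrightarrow> depth F v \<le> m"
    "L \<le> length w" using G unfolding GOOD_def by simp_all
  show ?thesis
  proof (rule build_fork[OF fk g(1-7) _ _ g(8)])
    show "\<forall>(p,q)\<in>tine_edges s1 \<inter> tine_edges s2. lab F q \<le> lab F b - 1"
    proof (intro ballI)
      fix e assume e: "e \<in> tine_edges s1 \<inter> tine_edges s2"
      obtain p q where pq: "e = (p,q)" by fastforce
      have "lab F q < lab F b" using G e pq unfolding GOOD_def by blast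
      then show "case e of (p,q) \<Rightarrow> lab F q \<le> lab F b - 1" using pq by simp
    qed
    show "lab F b - 1 + k + 1 \<le> L" using G bpos unfolding GOOD_def by linarith
  qed
qed

end
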